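(* Let $L\subseteq\mathbb{Z}^{(\mathbb{N})}$ be a $\mathrm{Sym}$-invariant lattice, and suppose $\mathcal{H}$ is a finite equivariant Hilbert basis of the monoid $M=L\cap\mathbb{Z}_{\ge0}^{(\mathbb{N})}$. Let $g_L=\gcd(u_i\mid\mathbf{u}=(u_i)_{i\in\mathbb{N}}\in L,\ i\in\mathbb{N})$ and $\mathbf{g}_L=g_L(\mathbf{e}_1-\mathbf{e}_2)$. Then $L$ has a finite equivariant Graver basis $\mathcal{G}$ with $\pm\mathcal{H}\subseteq\mathcal{G}\subseteq\pm\mathcal{H}\cup\{\pm\mathbf{g}_L\}$.
   Context: $\mathbb{N}=\{1,2,\dots\}$. $\mathbb{Z}^{(\mathbb{N})}$ is the group of finitely supported integer sequences with standard basis $\mathbf{e}_i$, $\mathbb{Z}_{\ge0}^{(\mathbb{N})}$ its nonnegative elements; a lattice is a subgroup. $\mathrm{Sym}$ is the group of permutations of $\mathbb{N}$ fixing all but finitely many points, acting by $\sigma(\mathbf{e}_i)=\mathbf{e}_{\sigma(i)}$. With $\mathbf{u}\sqsubseteq\mathbf{v}$ iff $u_iv_i\ge0$ and $|u_i|\le|v_i|$ for all $i$, the Graver basis of $L$ is the set of $\sqsubseteq$-minimal elements of $L\setminus\{\mathbf{0}\}$; $\mathcal{G}$ is an equivariant Graver basis if $\mathrm{Sym}(\mathcal{G})=\{\sigma(\mathbf{g})\mid\sigma\in\mathrm{Sym},\mathbf{g}\in\mathcal{G}\}$ is the Graver basis. A Hilbert basis of a monoid is a minimal generating set (w.r.t.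 $\mathbb{Z}_{\ge0}$-combinations); $\mathcal{H}$ is an equivariant Hilbert basis of a $\mathrm{Sym}$-invariant monoid $M$ if $\mathrm{Sym}(\mathcal{H})$ is a Hilbert basis of $M$. $\pm A=A\cup(-A)$. *)

theory Defs
  imports Main "HOL-Library.Function_Algebras"
begin

text \<open>Elements of Z^(N) (N = {1,2,...}) are represented as functions nat => int
  with finite support contained in {1,2,...} (value 0 at index 0).\<close>

definition fsupp :: "(nat \<Rightarrow> int) set" where
  "fsupp = {u. finite {i. u i \<noteq> 0} \<and> u 0 = 0}"

definition nonneg_fsupp :: "(nat \<Rightarrow> int) set" where
  "nonneg_fsupp = {u \<in> fsupp. \<forall>i. u i \<ge> 0}"

definition unitvec :: "nat \<Rightarrow> nat \<Rightarrow> int" ("\<e>") where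
  "unitvec i = (\<lambda>j. if j = i then 1 else 0)"

definition is_lattice :: "(nat \<Rightarrow> int) set \<Rightarrow> bool" where
  "is_lattice L \<longleftrightarrow> L \<subseteq> fsupp \<and> 0 \<in> L \<and>
     (\<forall>u\<in>L. \<forall>v\<in>L. u + v \<in> L) \<and> (\<forall>u\<in>L. - u \<in> L)"

definition Sym :: "(nat \<Rightarrow> nat) set" where
  "Sym = {\<sigma>. bij \<sigma> \<and> \<sigma> 0 = 0 \<and> finite {i. \<sigma> i \<noteq> i}}"

text \<open>Action sigma(e_i) = e_(sigma i), i.e. (sigma u)(sigma i) = u i.\<close>
definition act :: "(nat \<Rightarrow> nat) \<Rightarrow> (nat \<Rightarrow> int) \<Rightarrow> (nat \<Rightarrow> int)" where
  "act \<sigma> u = u \<circ> inv \<sigma>"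

definition sym_invariant :: "(nat \<Rightarrow> int) set \<Rightarrow> bool" where
  "sym_invariant A \<longleftrightarrow> (\<forall>\<sigma>\<in>Sym. \<forall>u\<in>A. act \<sigma> u \<in> A)"

definition orbit :: "(nat \<Rightarrow> int) set \<Rightarrow> (nat \<Rightarrow> int) set" where
  "orbit A = {act \<sigma> g | \<sigma> g. \<sigma> \<in> Sym \<and> g \<in> A}"

definition conformal :: "(nat \<Rightarrow> int) \<Rightarrow> (nat \<Rightarrow> int) \<Rightarrow> bool" (infix "\<sqsubseteq>" 50) where
  "u \<sqsubseteq> v \<longleftrightarrow> (\<forall>i. u i * v i \<ge> 0 \<and> \<bar>u i\<bar> \<le> \<bar>v i\<bar>)"

definition graver_basis :: "(nat \<Rightarrow> int) set \<Rightarrow> (nat \<Rightarrow> int) set" where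
  "graver_basis L = {u \<in> L - {0}. \<forall>v \<in> L - {0}. v \<sqsubseteq> u \<longrightarrow> v = u}"

definition equivariant_graver_basis :: "(nat \<Rightarrow> int) set \<Rightarrow> (nat \<Rightarrow> int) set \<Rightarrow> bool" where
  "equivariant_graver_basis L G \<longleftrightarrow> orbit G = graver_basis L"

inductive_set gen_monoid :: "(nat \<Rightarrow> int) set \<Rightarrow> (nat \<Rightarrow> int) set" for S where
  zero: "0 \<in> gen_monoid S"
| add: "s \<in> S \<Longrightarrow> x \<in> gen_monoid S \<Longrightarrow> s + x \<in> gen_monoid S"

definition hilbert_basis :: "(nat \<Rightarrow> int) set \<Rightarrow> (nat \<Rightarrow> int) set \<Rightarrow> bool" where
  "hilbert_basis M H \<longleftrightarrow> gen_monoid H = M \<and> (\<forall>h\<in>H. gen_monoid (H - {h}) \<noteq> M)"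

definition equivariant_hilbert_basis :: "(nat \<Rightarrow> int) set \<Rightarrow> (nat \<Rightarrow> int) set \<Rightarrow> bool" where
  "equivariant_hilbert_basis M H \<longleftrightarrow> hilbert_basis M (orbit H)"

definition pm :: "(nat \<Rightarrow> int) set \<Rightarrow> (nat \<Rightarrow> int) set" where
  "pm A = A \<union> uminus ` A"

definition gcd_lattice :: "(nat \<Rightarrow> int) set \<Rightarrow> int" where
  "gcd_lattice L = Gcd {u i | u i. u \<in> L \<and> i \<ge> 1}"

definition gvec_lattice :: "(nat \<Rightarrow> int) set \<Rightarrow> (nat \<Rightarrow> int)" where
  "gvec_lattice L = (\<lambda>i. gcd_lattice L * (\<e> 1 i - \<e> 2 i))"

end

theory Submission
  imports Defs
begin

definition tr :: "nat \<Rightarrow> nat \<Rightarrow> nat \<Rightarrow> nat" where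
  "tr a b = (\<lambda>k. if k = a then b else if k = b then a else k)"

lemma tr_tr: "tr a b \<circ> tr a b = id" by (auto simp: tr_def fun_eq_iff)
lemma bij_tr: "bij (tr a b)" using o_bij[OF tr_tr tr_tr] .
lemma inv_tr: "inv (tr a b) = tr a b" using inv_unique_comp[OF tr_tr tr_tr] .
lemma tr_Sym: "a \<ge> 1 \<Longrightarrow> b \<ge> 1 \<Longrightarrow> tr a b \<in> Sym"
proof -
  assume "a \<ge> 1" "b \<ge> 1"
  moreover have "{i. tr a b i \<noteq> i} \<subseteq> {a,b}" by (auto simp: tr_def)
  hence "finite {i. tr a b i \<noteq> i}" by (rule finite_subset) simp
  ultimately show ?thesis unfolding Sym_def using bij_tr by (auto simp: tr_def)
qed

lemma Sym_comp: "\<sigma> \<in> Sym \<Longrightarrow> \<tau> \<in> Sym \<Longrightarrow> \<sigma> \<circ> \<tau> \<in> Sym"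
proof -
  assume a: "\<sigma> \<in> Sym" "\<tau> \<in> Sym"
  have "{i. (\<sigma> \<circ> \<tau>) i \<noteq> i} \<subseteq> {i. \<tau> i \<noteq> i} \<union> {i. \<sigma> i \<noteq> i}" by auto
  moreover have "finite ({i. \<tau> i \<noteq> i} \<union> {i. \<sigma> i \<noteq> i})" using a by (simp add: Sym_def)
  ultimately have "finite {i. (\<sigma> \<circ> \<tau>) i \<noteq> i}" by (rule finite_subset)
  thus ?thesis using a unfolding Sym_def by (auto intro: bij_comp)
qed

lemma Sym_inv: "\<sigma> \<in> Sym \<Longrightarrow> inv \<sigma> \<in> Sym"
proof -
  assume a: "\<sigma> \<in> Sym"
  hence b: "bij \<sigma>" "\<sigma> 0 = 0" "finite {i. \<sigma> i \<noteq> i}" by (auto simp: Sym_def)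
  have "{i. inv \<sigma> i \<noteq> i} \<subseteq> {i. \<sigma> i \<noteq> i}"
    using b(1) by (auto simp: bij_is_inj inv_f_eq)
  hence "finite {i. inv \<sigma> i \<noteq> i}" using b(3) by (rule finite_subset)
  moreover have "inv \<sigma> 0 = 0" using b by (simp add: bij_is_inj inv_f_eq)
  ultimately show ?thesis using b(1) by (simp add: Sym_def bij_imp_bij_inv)
qed

lemma id_Sym: "id \<in> Sym" by (simp add: Sym_def)

lemma act_apply: "bij \<sigma> \<Longrightarrow> act \<sigma> u (\<sigma> a) = u a"
  by (simp add: act_def bij_is_inj)

lemma act_inv_act: "bij \<sigma> \<Longrightarrow> act (inv \<sigma>) (act \<sigma> u) = u"
  by (simp add: act_def inv_inv_eq o_assoc bij_is_inj)

lemma act_act_inv: "bij \<sigma> \<Longrightarrow> act \<sigma> (act (inv \<sigma>) u) = u"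
  by (rule ext) (simp add: act_def inv_inv_eq bij_is_surj surj_f_inv_f)

lemma act_uminus: "act \<sigma> (- u) = - act \<sigma> u"
  unfolding act_def by (rule ext) simp

lemma act_zero: "act \<sigma> 0 = 0"
  unfolding act_def by (rule ext) simp

lemma inv_eq_iff': "bij \<sigma> \<Longrightarrow> (inv \<sigma> k = x) = (k = \<sigma> x)"
  by (metis bij_inv_eq_iff)

lemma act_vec2: "bij \<sigma> \<Longrightarrow> act \<sigma> (\<lambda>k. c * (\<e> a k - \<e> b k)) = (\<lambda>k. c * (\<e> (\<sigma> a) k - \<e> (\<sigma> b) k))"
  by (rule ext) (simp add: act_def unitvec_def inv_eq_iff')

lemma act_vec1: "bij \<sigma> \<Longrightarrow> act \<sigma> (\<lambda>k. c * \<e> a k) = (\<lambda>k. c * \<e> (\<sigma> a) k)"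
  by (rule ext) (simp add: act_def unitvec_def inv_eq_iff')

lemma transport:
  assumes "a \<ge> 1" "b \<ge> 1" "i \<ge> 1" "j \<ge> 1" "a \<noteq> b" "i \<noteq> j"
  shows "\<exists>\<sigma>\<in>Sym. \<sigma> a = i \<and> \<sigma> b = j"
proof -
  define b' where "b' = tr a i b"
  have b1: "b' \<ge> 1" using assms by (auto simp: b'_def tr_def)
  have bi: "b' \<noteq> i" using assms by (auto simp: b'_def tr_def)
  define \<sigma> where "\<sigma> = tr b' j \<circ> tr a i"
  have "\<sigma> \<in> Sym" unfolding \<sigma>_def using b1 assms by (intro Sym_comp tr_Sym) auto
  moreover have "\<sigma> a = i" using bi assms by (simp add: \<sigma>_def tr_def)
  moreover have "\<sigma> b = j" by (simp add: \<sigma>_def b'_def[symmetric]) (simp add: tr_def)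
  ultimately show ?thesis by blast
qed

lemma lat_diff: "is_lattice L \<Longrightarrow> u \<in> L \<Longrightarrow> v \<in> L \<Longrightarrow> u - v \<in> L"
  unfolding is_lattice_def by (metis diff_conv_add_uminus)

lemma lat_mult_nat: "is_lattice L \<Longrightarrow> w \<in> L \<Longrightarrow> (\<lambda>t. int n * w t) \<in> L"
proof (induction n)
  case 0 thus ?case by (simp add: is_lattice_def zero_fun_def)
next
  case (Suc n)
  have "(\<lambda>t. int (Suc n) * w t) = w + (\<lambda>t. int n * w t)" by (auto simp: fun_eq_iff algebra_simps)
  thus ?case using Suc unfolding is_lattice_def by simp
qed

lemma lat_mult: "is_lattice L \<Longrightarrow> w \<in> L \<Longrightarrow> (\<lambda>t. k * w t) \<in> L"
proof (cases "k \<ge> 0")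
  case True
  assume "is_lattice L" "w \<in> L"
  thus ?thesis using lat_mult_nat[of L w "nat k"] True by simp
next
  case False
  assume a: "is_lattice L" "w \<in> L"
  have "(\<lambda>t. int (nat (-k)) * w t) \<in> L" using lat_mult_nat a by blast
  hence "- (\<lambda>t. int (nat (-k)) * w t) \<in> L" using a by (simp add: is_lattice_def)
  moreover have "- (\<lambda>t. int (nat (-k)) * w t) = (\<lambda>t. k * w t)" using False by (auto simp: fun_eq_iff)
  ultimately show ?thesis by simp
qed

lemma gm_add: "a \<in> gen_monoid S \<Longrightarrow> b \<in> gen_monoid S \<Longrightarrow> a + b \<in> gen_monoid S"
proof (induction a rule: gen_monoid.induct)
  case zero thus ?case by simp
next
  case (add s x) thus ?case by (metis add.assoc gen_monoid.add)
qed

lemma gm_mono: "x \<in> gen_monoid S \<Longrightarrow> S \<subseteq> T \<Longrightarrow> x \<in> gen_monoid T"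
  by (induction x rule: gen_monoid.induct) (auto intro: gen_monoid.intros)

lemma gm_avoid:
  assumes nn: "\<And>y i. y \<in> gen_monoid Ob \<Longrightarrow> 0 \<le> y i"
  shows "x \<in> gen_monoid Ob \<Longrightarrow> \<not> (\<forall>i. h i \<le> x i) \<Longrightarrow> x \<in> gen_monoid (Ob - {h})"
proof (induction x rule: gen_monoid.induct)
  case zero show ?case by (rule gen_monoid.zero)
next
  case (add s y)
  have s0: "\<And>i. 0 \<le> s i" using nn[of "s + 0"] add(1) gen_monoid.add[OF add(1) gen_monoid.zero] by simp
  have y0: "\<And>i. 0 \<le> y i" using nn add(2) by blast
  have "s \<noteq> h"
  proof
    assume "s = h"
    hence "\<forall>i. h i \<le> (s + y) i" using y0 by (simp add: add_increasing2)
    thus False using add(4) by blast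
  qed
  moreover have "\<not> (\<forall>i. h i \<le> y i)"
  proof
    assume "\<forall>i. h i \<le> y i"
    hence "\<forall>i. h i \<le> (s + y) i" using s0 by (simp add: add_increasing)
    thus False using add(4) by blast
  qed
  ultimately have "s \<in> Ob - {h}" "y \<in> gen_monoid (Ob - {h})" using add by auto
  thus ?case by (rule gen_monoid.add)
qed

lemma gm_replace: "x \<in> gen_monoid Ob \<Longrightarrow> h \<in> gen_monoid (Ob - {h}) \<Longrightarrow> x \<in> gen_monoid (Ob - {h})"
proof (induction x rule: gen_monoid.induct)
  case zero show ?case by (rule gen_monoid.zero)
next
  case (add s y)
  hence y: "y \<in> gen_monoid (Ob - {h})" by blast
  show ?case
  proof (cases "s = h")
    case True from gm_add[OF add.prems y] show ?thesis unfolding True .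
  next
    case False hence "s \<in> Ob - {h}" using add by blast
    thus ?thesis using y by (rule gen_monoid.add)
  qed
qed

lemma hb_elem_graver:
  assumes lat: "is_lattice L"
    and hb: "hilbert_basis (L \<inter> nonneg_fsupp) Ob"
    and hO: "h \<in> Ob"
  shows "h \<in> graver_basis L"
proof -
  let ?M = "L \<inter> nonneg_fsupp"
  have gm: "gen_monoid Ob = ?M" and mn: "gen_monoid (Ob - {h}) \<noteq> ?M" using hb hO by (auto simp: hilbert_basis_def)
  have nn: "\<And>y i. y \<in> gen_monoid Ob \<Longrightarrow> 0 \<le> y i" using gm by (auto simp: nonneg_fsupp_def)
  have hM: "h \<in> ?M" using gm gen_monoid.add[OF hO gen_monoid.zero] by simp
  have contra: False if "h \<in> gen_monoid (Ob - {h})"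
  proof -
    have "gen_monoid (Ob - {h}) = ?M"
      using gm_replace[OF _ that] gm_mono[of _ "Ob - {h}" Ob] gm by blast
    thus False using mn by simp
  qed
  have h0: "h \<noteq> 0" using contra gen_monoid.zero by blast
  have hL: "h \<in> L" using hM by simp
  have hnn: "\<And>i. 0 \<le> h i" using hM by (auto simp: nonneg_fsupp_def)
  have "v = h" if vL: "v \<in> L" and v0: "v \<noteq> 0" and vc: "v \<sqsubseteq> h" for v
  proof (rule ccontr)
    assume vh: "v \<noteq> h"
    have vb: "0 \<le> v i \<and> v i \<le> h i" for i
    proof -
      have "v i * h i \<ge> 0" "\<bar>v i\<bar> \<le> \<bar>h i\<bar>" using vc by (auto simp: conformal_def)
      thus ?thesis using hnn[of i] by (cases "h i = 0") (auto simp: zero_le_mult_iff)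
    qed
    define w where "w = h - v"
    have wL: "w \<in> L" using lat_diff[OF lat hL vL] by (simp add: w_def)
    have fs: "\<And>x. x \<in> L \<Longrightarrow> x \<in> fsupp" using lat by (auto simp: is_lattice_def)
    have vM: "v \<in> ?M" using vL fs vb by (auto simp: nonneg_fsupp_def)
    have wM: "w \<in> ?M" using wL fs vb by (auto simp: nonneg_fsupp_def w_def)
    have "\<not> (\<forall>i. h i \<le> v i)" using vh vb by (metis antisym ext)
    hence v1: "v \<in> gen_monoid (Ob - {h})" using gm_avoid[of Ob v h] nn vM gm by blast
    have "\<not> (\<forall>i. h i \<le> w i)"
    proof
      assume "\<forall>i. h i \<le> w i"
      hence "\<forall>i. v i = 0" using vb by (auto simp: w_def) (metis antisym diff_ge_0_iff_ge le_diff_eq le_add_same_cancel1)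
      thus False using v0 by auto
    qed
    hence w1: "w \<in> gen_monoid (Ob - {h})" using gm_avoid[of Ob w h] nn wM gm by blast
    have "h = v + w" by (simp add: w_def)
    hence "h \<in> gen_monoid (Ob - {h})" using gm_add[OF v1 w1] by simp
    thus False by (rule contra)
  qed
  thus ?thesis using hL h0 by (auto simp: graver_basis_def)
qed

lemma graver_nonneg:
  assumes lat: "is_lattice L"
    and hb: "hilbert_basis (L \<inter> nonneg_fsupp) Ob"
    and u: "u \<in> graver_basis L" and nn: "\<And>i. 0 \<le> u i"
  shows "u \<in> Ob"
proof -
  have gm: "gen_monoid Ob = L \<inter> nonneg_fsupp" using hb by (simp add: hilbert_basis_def)
  have uL: "u \<in> L" and u0: "u \<noteq> 0" and ug: "\<And>v. v \<in> L \<Longrightarrow> v \<noteq> 0 \<Longrightarrow> v \<sqsubseteq> u \<Longrightarrow> v = u"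
    using u by (auto simp: graver_basis_def)
  have "u \<in> fsupp" using uL lat by (auto simp: is_lattice_def)
  hence "u \<in> gen_monoid Ob" using gm uL nn by (auto simp: nonneg_fsupp_def)
  then obtain s y where s: "s \<in> Ob" and y: "y \<in> gen_monoid Ob" and us: "u = s + y"
    using u0 by (cases rule: gen_monoid.cases) auto
  have sM: "s \<in> gen_monoid Ob" using gen_monoid.add[OF s gen_monoid.zero] by simp
  have s0: "\<And>i. 0 \<le> s i" using sM gm by (auto simp: nonneg_fsupp_def)
  have y0: "\<And>i. 0 \<le> y i" using y gm by (auto simp: nonneg_fsupp_def)
  have sL: "s \<in> L" using sM gm by auto
  have "s \<noteq> 0" using hb_elem_graver[OF lat hb s] by (auto simp: graver_basis_def)
  moreover have "s \<sqsubseteq> u" using s0 y0 by (auto simp: conformal_def us)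
  ultimately have "s = u" using ug sL by blast
  thus ?thesis using s by simp
qed

lemma graver_neg: "is_lattice L \<Longrightarrow> u \<in> graver_basis L \<Longrightarrow> - u \<in> graver_basis L"
proof -
  assume lat: "is_lattice L" and u: "u \<in> graver_basis L"
  have uL: "u \<in> L" and u0: "u \<noteq> 0" and ug: "\<And>v. v \<in> L \<Longrightarrow> v \<noteq> 0 \<Longrightarrow> v \<sqsubseteq> u \<Longrightarrow> v = u"
    using u by (auto simp: graver_basis_def)
  have "- u \<in> L" using lat uL by (auto simp: is_lattice_def)
  moreover have "- u \<noteq> 0" using u0 by simp
  moreover have "v = - u" if "v \<in> L" "v \<noteq> 0" "v \<sqsubseteq> - u" for v
  proof -
    have "- v \<in> L" using lat that by (auto simp: is_lattice_def)
    moreover have "- v \<sqsubseteq> u" using that(3) by (auto simp: conformal_def)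
    ultimately have "- v = u" using ug that(2) by simp
    thus ?thesis by auto
  qed
  ultimately show ?thesis by (auto simp: graver_basis_def)
qed

lemma graver_act:
  assumes si: "sym_invariant L" and s: "\<sigma> \<in> Sym" and u: "u \<in> graver_basis L"
  shows "act \<sigma> u \<in> graver_basis L"
proof -
  have b: "bij \<sigma>" using s by (simp add: Sym_def)
  have si': "\<And>\<tau> x. \<tau> \<in> Sym \<Longrightarrow> x \<in> L \<Longrightarrow> act \<tau> x \<in> L" using si by (simp add: sym_invariant_def)
  have uL: "u \<in> L" and u0: "u \<noteq> 0" and ug: "\<And>v. v \<in> L \<Longrightarrow> v \<noteq> 0 \<Longrightarrow> v \<sqsubseteq> u \<Longrightarrow> v = u"
    using u by (auto simp: graver_basis_def)
  have "act \<sigma> u \<in> L" using si' s uL by blast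
  moreover have "act \<sigma> u \<noteq> 0" using u0 act_inv_act[OF b, of u] act_zero by metis
  moreover have "v = act \<sigma> u" if "v \<in> L" "v \<noteq> 0" "v \<sqsubseteq> act \<sigma> u" for v
  proof -
    let ?v = "act (inv \<sigma>) v"
    have "?v \<in> L" using si' Sym_inv[OF s] that(1) by blast
    moreover have "?v \<noteq> 0" using that(2) act_act_inv[OF b, of v] act_zero by metis
    moreover have "?v \<sqsubseteq> u"
      unfolding conformal_def
    proof
      fix i
      have "?v i = v (\<sigma> i)" by (simp add: act_def inv_inv_eq b)
      moreover have "u i = act \<sigma> u (\<sigma> i)" using act_apply[OF b] by simp
      ultimately show "0 \<le> ?v i * u i \<and> \<bar>?v i\<bar> \<le> \<bar>u i\<bar>" using that(3) by (simp add: conformal_def)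
    qed
    ultimately have "?v = u" using ug by blast
    thus ?thesis using act_act_inv[OF b, of v] by simp
  qed
  ultimately show ?thesis by (auto simp: graver_basis_def)
qed

lemma gcd_dvd_coord: "u \<in> L \<Longrightarrow> i \<ge> 1 \<Longrightarrow> gcd_lattice L dvd u i"
  unfolding gcd_lattice_def by (rule Gcd_dvd) blast

lemma act_tr: "act (tr a b) u = u \<circ> tr a b"
  by (simp add: act_def inv_tr)

lemma coord_vec:
  assumes lat: "is_lattice L" and si: "sym_invariant L" and uL: "u \<in> L" and p: "p \<ge> 1"
    and ij: "i \<ge> 1" "j \<ge> 1" "i \<noteq> j"
  shows "(\<lambda>t. u p * (\<e> i t - \<e> j t)) \<in> L"
proof -
  have "finite {k. u k \<noteq> 0}" using uL lat by (auto simp: is_lattice_def fsupp_def)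
  hence "finite ({0,p,i,j} \<union> {k. u k \<noteq> 0})" by simp
  then obtain q where q: "q \<notin> {0,p,i,j} \<union> {k. u k \<noteq> 0}" using ex_new_if_finite[OF infinite_UNIV_nat] by blast
  have si': "\<And>\<tau> x. \<tau> \<in> Sym \<Longrightarrow> x \<in> L \<Longrightarrow> act \<tau> x \<in> L" using si by (simp add: sym_invariant_def)
  have "act (tr p q) u \<in> L" using si' tr_Sym[of p q] p q uL by auto
  hence "u - act (tr p q) u \<in> L" using lat_diff[OF lat uL] by blast
  moreover have "u - act (tr p q) u = (\<lambda>t. u p * (\<e> p t - \<e> q t))"
    unfolding act_tr using q by (auto simp: fun_eq_iff tr_def unitvec_def)
  ultimately have x: "(\<lambda>t. u p * (\<e> p t - \<e> q t)) \<in> L" by simp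
  obtain \<sigma> where s: "\<sigma> \<in> Sym" "\<sigma> p = i" "\<sigma> q = j"
    using transport[of p q i j] p q ij by auto
  have "act \<sigma> (\<lambda>t. u p * (\<e> p t - \<e> q t)) \<in> L" using si' s x by blast
  moreover have "bij \<sigma>" using s by (simp add: Sym_def)
  ultimately show ?thesis using act_vec2 s by metis
qed

lemma gvec_in:
  assumes lat: "is_lattice L" and si: "sym_invariant L"
    and ij: "i \<ge> 1" "j \<ge> 1" "i \<noteq> j"
  shows "(\<lambda>t. gcd_lattice L * (\<e> i t - \<e> j t)) \<in> L"
proof -
  define I where "I = {k. (\<lambda>t. k * (\<e> i t - \<e> j t)) \<in> L}"
  define S where "S = {u p | u p. u \<in> L \<and> p \<ge> 1}"
  have g: "gcd_lattice L = Gcd S" by (simp add: gcd_lattice_def S_def)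
  have SI: "S \<subseteq> I" using coord_vec[OF lat si _ _ ij] by (auto simp: S_def I_def)
  have mI: "m * k \<in> I" if "k \<in> I" for m k
  proof -
    have "(\<lambda>t. m * ((\<lambda>t. k * (\<e> i t - \<e> j t)) t)) \<in> L"
      using lat_mult[OF lat] that by (simp add: I_def)
    thus ?thesis by (simp add: I_def mult.assoc)
  qed
  have dI: "a - b \<in> I" if "a \<in> I" "b \<in> I" for a b
  proof -
    have "(\<lambda>t. a * (\<e> i t - \<e> j t)) - (\<lambda>t. b * (\<e> i t - \<e> j t)) \<in> L"
      using lat_diff[OF lat] that by (simp add: I_def)
    moreover have "(\<lambda>t. a * (\<e> i t - \<e> j t)) - (\<lambda>t. b * (\<e> i t - \<e> j t)) = (\<lambda>t. (a - b) * (\<e> i t - \<e> j t))"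
      by (auto simp: fun_eq_iff algebra_simps)
    ultimately show ?thesis by (simp add: I_def)
  qed
  show ?thesis
  proof (cases "I \<subseteq> {0}")
    case True
    hence "S \<subseteq> {0}" using SI by blast
    hence g0: "Gcd S = 0" by (simp add: Gcd_0_iff)
    have "(\<lambda>t. (0::int) * (\<e> i t - \<e> j t)) = 0" by (simp add: fun_eq_iff)
    thus ?thesis using lat g g0 by (simp add: is_lattice_def)
  next
    case False
    then obtain k where k: "k \<in> I" "k \<noteq> 0" by blast
    have "\<bar>k\<bar> \<in> I" using mI[OF k(1), of "sgn k"] by (simp add: abs_sgn mult.commute)
    hence ex: "\<exists>n::nat. n > 0 \<and> int n \<in> I" using k(2) by (intro exI[of _ "nat \<bar>k\<bar>"]) auto
    define d where "d = (LEAST n::nat. n > 0 \<and> int n \<in> I)"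
    have d: "d > 0" "int d \<in> I" using LeastI_ex[OF ex] by (auto simp: d_def)
    have "int d dvd x" if "x \<in> I" for x
    proof -
      have "x mod int d = x - int d * (x div int d)" by (simp add: mod_div_mult_eq[symmetric] algebra_simps)
      hence "x mod int d \<in> I" using dI[OF that mI[OF d(2), of "x div int d"]] by (simp add: mult.commute)
      moreover have "0 \<le> x mod int d" "x mod int d < int d" using d(1) by auto
      ultimately have "x mod int d = 0"
      proof -
        assume a: "x mod int d \<in> I" "0 \<le> x mod int d" "x mod int d < int d"
        show ?thesis
        proof (rule ccontr)
          assume "x mod int d \<noteq> 0"
          hence "nat (x mod int d) > 0 \<and> int (nat (x mod int d)) \<in> I" using a by auto
          hence "d \<le> nat (x mod int d)" unfolding d_def by (rule Least_le)
          thus False using a by auto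
        qed
      qed
      thus ?thesis by (simp add: dvd_eq_mod_eq_0)
    qed
    hence "int d dvd Gcd S" using SI by (intro Gcd_greatest) blast
    then obtain m where "Gcd S = int d * m" by blast
    hence "Gcd S \<in> I" using mI[OF d(2), of m] by (simp add: mult.commute)
    thus ?thesis using g by (simp add: I_def)
  qed
qed

lemma g_nonneg: "gcd_lattice L \<ge> 0"
  by (simp add: gcd_lattice_def)

lemma mixed:
  assumes lat: "is_lattice L" and si: "sym_invariant L" and u: "u \<in> graver_basis L"
    and ui: "u i > 0" and uj: "u j < 0"
  shows "i \<ge> 1 \<and> j \<ge> 1 \<and> i \<noteq> j \<and> gcd_lattice L > 0 \<and> u = (\<lambda>t. gcd_lattice L * (\<e> i t - \<e> j t))"
proof -
  have uL: "u \<in> L" and ug: "\<And>v. v \<in> L \<Longrightarrow> v \<noteq> 0 \<Longrightarrow> v \<sqsubseteq> u \<Longrightarrow> v = u"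
    using u by (auto simp: graver_basis_def)
  have "u 0 = 0" using uL lat by (auto simp: is_lattice_def fsupp_def)
  hence "i \<noteq> 0" "j \<noteq> 0" using ui uj by (metis less_irrefl)+
  moreover have "i \<noteq> j" using ui uj by auto
  ultimately have ij: "i \<ge> 1" "j \<ge> 1" "i \<noteq> j" by auto
  let ?g = "gcd_lattice L"
  have di: "?g dvd u i" and dj: "?g dvd u j" using gcd_dvd_coord[OF uL] ij by auto
  have g0: "?g > 0" using di ui g_nonneg[of L] by (metis dvd_0_left less_irrefl order_le_less)
  have gi: "?g \<le> u i" using di ui by (simp add: zdvd_imp_le)
  have gj: "?g \<le> - u j" using dj uj by (simp add: zdvd_imp_le)
  let ?v = "\<lambda>t. ?g * (\<e> i t - \<e> j t)"
  have "?v \<in> L" using gvec_in[OF lat si ij] .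
  moreover have "?v \<noteq> 0"
  proof
    assume h: "?v = 0"
    show False using fun_cong[OF h, of i] g0 ij by (simp add: unitvec_def)
  qed
  moreover have "?v \<sqsubseteq> u"
    unfolding conformal_def
  proof
    fix t
    show "0 \<le> ?v t * u t \<and> \<bar>?v t\<bar> \<le> \<bar>u t\<bar>"
      using ij g0 gi gj ui uj by (cases "t = i"; cases "t = j") (auto simp: unitvec_def mult_le_0_iff)
  qed
  ultimately have "?v = u" using ug by blast
  thus ?thesis using ij g0 by simp
qed

lemma e1_notin:
  assumes lat: "is_lattice L" and si: "sym_invariant L" and u: "u \<in> graver_basis L"
    and ui: "u i > 0" and uj: "u j < 0"
  shows "(\<lambda>t. gcd_lattice L * \<e> 1 t) \<notin> L"
proof
  assume a: "(\<lambda>t. gcd_lattice L * \<e> 1 t) \<in> L"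
  let ?g = "gcd_lattice L"
  have m: "i \<ge> 1" "j \<ge> 1" "i \<noteq> j" "?g > 0" and ueq: "u = (\<lambda>t. ?g * (\<e> i t - \<e> j t))"
    using mixed[OF lat si u ui uj] by auto
  have ug: "\<And>v. v \<in> L \<Longrightarrow> v \<noteq> 0 \<Longrightarrow> v \<sqsubseteq> u \<Longrightarrow> v = u"
    using u by (auto simp: graver_basis_def)
  have si': "\<And>\<tau> x. \<tau> \<in> Sym \<Longrightarrow> x \<in> L \<Longrightarrow> act \<tau> x \<in> L" using si by (simp add: sym_invariant_def)
  have "act (tr 1 i) (\<lambda>t. ?g * \<e> 1 t) \<in> L" using si' tr_Sym[of 1 i] m a by auto
  moreover have "act (tr 1 i) (\<lambda>t. ?g * \<e> 1 t) = (\<lambda>t. ?g * \<e> i t)"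
    using act_vec1[OF bij_tr] by (simp add: tr_def)
  ultimately have vL: "(\<lambda>t. ?g * \<e> i t) \<in> L" by simp
  have "(\<lambda>t. ?g * \<e> i t) \<noteq> 0"
  proof
    assume "(\<lambda>t. ?g * \<e> i t) = 0"
    hence "?g * \<e> i i = 0" by (metis zero_fun_def)
    thus False using m by (simp add: unitvec_def)
  qed
  moreover have "(\<lambda>t. ?g * \<e> i t) \<sqsubseteq> u"
    unfolding conformal_def ueq
  proof
    fix t
    show "0 \<le> ?g * \<e> i t * (?g * (\<e> i t - \<e> j t)) \<and> \<bar>?g * \<e> i t\<bar> \<le> \<bar>?g * (\<e> i t - \<e> j t)\<bar>"
      using m by (cases "t = i"; cases "t = j") (auto simp: unitvec_def)
  qed
  ultimately have "(\<lambda>t. ?g * \<e> i t) = u" using ug vL by blast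
  hence "?g * \<e> i j = u j" by metis
  thus False using m uj by (simp add: unitvec_def)
qed

lemma dvd_range: "(g::int) > 0 \<Longrightarrow> g dvd x \<Longrightarrow> 0 \<le> x \<Longrightarrow> x \<le> g \<Longrightarrow> x = 0 \<or> x = g"
proof -
  assume a: "g > 0" "g dvd x" "0 \<le> x" "x \<le> g"
  then obtain m where x: "x = g * m" by blast
  have "m \<ge> 0" using a x by (simp add: zero_le_mult_iff)
  moreover have "m \<le> 1" using a x by (metis mult.right_neutral mult_le_cancel_left_pos)
  ultimately have "m = 0 \<or> m = 1" by auto
  thus ?thesis using x by auto
qed

lemma gvec_graver:
  assumes lat: "is_lattice L" and si: "sym_invariant L"
    and n: "(\<lambda>t. gcd_lattice L * \<e> 1 t) \<notin> L"
  shows "gvec_lattice L \<in> graver_basis L"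
proof -
  let ?g = "gcd_lattice L"
  have si': "\<And>\<tau> x. \<tau> \<in> Sym \<Longrightarrow> x \<in> L \<Longrightarrow> act \<tau> x \<in> L" using si by (simp add: sym_invariant_def)
  have "?g \<noteq> 0"
  proof
    assume "?g = 0"
    hence "(\<lambda>t. gcd_lattice L * \<e> 1 t) = 0" by (simp add: fun_eq_iff)
    thus False using n lat by (simp add: is_lattice_def)
  qed
  hence g0: "?g > 0" using g_nonneg[of L] by linarith
  have gv: "gvec_lattice L = (\<lambda>t. ?g * (\<e> 1 t - \<e> 2 t))" by (simp add: gvec_lattice_def)
  have gL: "gvec_lattice L \<in> L" using gvec_in[OF lat si, of 1 2] gv by simp
  have gnz: "gvec_lattice L \<noteq> 0"
  proof
    assume "gvec_lattice L = 0"
    hence "gvec_lattice L 1 = 0" by simp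
    thus False using g0 by (simp add: gv unitvec_def)
  qed
  have "v = gvec_lattice L" if vL: "v \<in> L" and v0: "v \<noteq> 0" and vc: "v \<sqsubseteq> gvec_lattice L" for v
  proof -
    have c: "0 \<le> v t * gvec_lattice L t \<and> \<bar>v t\<bar> \<le> \<bar>gvec_lattice L t\<bar>" for t
      using vc by (simp add: conformal_def)
    have vo: "v t = 0" if "t \<noteq> 1" "t \<noteq> 2" for t
      using c[of t] that by (simp add: gv unitvec_def)
    have gv1: "gvec_lattice L 1 = ?g" and gv2: "gvec_lattice L 2 = - ?g" by (simp_all add: gv unitvec_def)
    have p1: "0 \<le> v 1 * ?g" "\<bar>v 1\<bar> \<le> ?g" using c[of 1] g0 unfolding gv1 by simp_all
    have p2: "0 \<le> - v 2 * ?g" "\<bar>v 2\<bar> \<le> ?g" using c[of 2] g0 unfolding gv2 by simp_all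
    have "0 \<le> v 1" using p1(1) g0 by (simp add: zero_le_mult_iff)
    hence c1: "0 \<le> v 1" "v 1 \<le> ?g" using p1(2) by simp_all
    have "0 \<le> - v 2" using p2(1) g0 by (simp add: mult_le_0_iff)
    hence c2: "0 \<le> - v 2" "- v 2 \<le> ?g" using p2(2) by simp_all
    have d1: "?g dvd v 1" and d2: "?g dvd - v 2" using gcd_dvd_coord[OF vL] by auto
    have r1: "v 1 = 0 \<or> v 1 = ?g" using dvd_range[OF g0 d1 c1] .
    have r2: "- v 2 = 0 \<or> - v 2 = ?g" using dvd_range[OF g0 d2 c2] .
    have ve: "v = (\<lambda>t. v 1 * \<e> 1 t + v 2 * \<e> 2 t)"
      using vo by (auto simp: fun_eq_iff unitvec_def)
    show ?thesis
    proof (cases "v 1 = 0")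
      case True
      show ?thesis
      proof (cases "v 2 = 0")
        case True
        hence "v = 0" by (subst ve) (use True \<open>v 1 = 0\<close> in \<open>simp add: fun_eq_iff\<close>)
        thus ?thesis using v0 by simp
      next
        case False
        hence v2: "v 2 = - ?g" using r2 by auto
        have "- v \<in> L" using vL lat by (simp add: is_lattice_def)
        moreover have "- v = (\<lambda>t. ?g * \<e> 2 t)" by (subst ve) (use \<open>v 1 = 0\<close> v2 in \<open>simp add: fun_eq_iff\<close>)
        ultimately have "(\<lambda>t. ?g * \<e> 2 t) \<in> L" by simp
        hence "act (tr 2 1) (\<lambda>t. ?g * \<e> 2 t) \<in> L" using si' tr_Sym[of 2 1] by auto
        moreover have "act (tr 2 1) (\<lambda>t. ?g * \<e> 2 t) = (\<lambda>t. ?g * \<e> 1 t)"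
          using act_vec1[OF bij_tr] by (simp add: tr_def)
        ultimately show ?thesis using n by simp
      qed
    next
      case False
      hence v1: "v 1 = ?g" using r1 by auto
      show ?thesis
      proof (cases "v 2 = 0")
        case True
        hence "v = (\<lambda>t. ?g * \<e> 1 t)" by (subst ve) (use True v1 in \<open>simp add: fun_eq_iff\<close>)
        thus ?thesis using n vL by simp
      next
        case False
        hence v2: "v 2 = - ?g" using r2 by auto
        show ?thesis by (subst ve) (use v1 v2 in \<open>simp add: gv fun_eq_iff algebra_simps\<close>)
      qed
    qed
  qed
  thus ?thesis using gL gnz by (auto simp: graver_basis_def)
qed

lemma orbit_mono: "A \<subseteq> B \<Longrightarrow> orbit A \<subseteq> orbit B"
  by (auto simp: orbit_def)

lemma orbit_self: "A \<subseteq> orbit A"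
proof
  fix x assume "x \<in> A"
  moreover have "act id x = x" by (simp add: act_def inv_id)
  ultimately show "x \<in> orbit A" using id_Sym unfolding orbit_def by force
qed

theorem theorem4p9:
  fixes L H :: "(nat \<Rightarrow> int) set"
  assumes "is_lattice L" and "sym_invariant L"
    and "finite H"
    and "equivariant_hilbert_basis (L \<inter> nonneg_fsupp) H"
  shows "\<exists>G. finite G \<and> equivariant_graver_basis L G \<and>
           pm H \<subseteq> G \<and>
           G \<subseteq> pm H \<union> {gvec_lattice L, - gvec_lattice L}"
proof -
  note lat = assms(1) and si = assms(2)
  have hb: "hilbert_basis (L \<inter> nonneg_fsupp) (orbit H)"
    using assms(4) by (simp add: equivariant_hilbert_basis_def)
  let ?g = "gcd_lattice L"
  let ?c = "(\<lambda>t. ?g * \<e> 1 t) \<notin> L"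
  define G where "G = pm H \<union> (if ?c then {gvec_lattice L, - gvec_lattice L} else {})"
  have fin: "finite G" using assms(3) by (simp add: G_def pm_def)
  have HG: "H \<subseteq> graver_basis L" using hb_elem_graver[OF lat hb] orbit_self[of H] by blast
  have GG: "G \<subseteq> graver_basis L"
  proof
    fix x assume "x \<in> G"
    then consider "x \<in> H" | "x \<in> uminus ` H" | "?c" "x = gvec_lattice L" | "?c" "x = - gvec_lattice L"
      unfolding G_def pm_def by (auto split: if_splits)
    thus "x \<in> graver_basis L"
    proof cases
      case 1 thus ?thesis using HG by blast
    next
      case 2 thus ?thesis using HG graver_neg[OF lat] by blast
    next
      case 3 thus ?thesis using gvec_graver[OF lat si] by simp
    next
      case 4 thus ?thesis using gvec_graver[OF lat si] graver_neg[OF lat] by simp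
    qed
  qed
  have "orbit G \<subseteq> graver_basis L"
    using GG graver_act[OF si] by (auto simp: orbit_def)
  moreover have "graver_basis L \<subseteq> orbit G"
  proof
    fix u assume u: "u \<in> graver_basis L"
    show "u \<in> orbit G"
    proof (cases "\<forall>i. 0 \<le> u i")
      case True
      hence "u \<in> orbit H" using graver_nonneg[OF lat hb u] by blast
      moreover have "orbit H \<subseteq> orbit G" by (rule orbit_mono) (auto simp: G_def pm_def)
      ultimately show ?thesis by blast
    next
      case False
      show ?thesis
      proof (cases "\<forall>i. u i \<le> 0")
        case True
        have "- u \<in> graver_basis L" using graver_neg[OF lat u] .
        moreover have "\<forall>i. 0 \<le> (- u) i" using True by simp
        ultimately have "- u \<in> orbit H" using graver_nonneg[OF lat hb] by blast
        then obtain \<sigma> h where s: "\<sigma> \<in> Sym" "h \<in> H" "- u = act \<sigma> h" by (auto simp: orbit_def)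
        have "u = act \<sigma> (- h)" using s(3) by (simp add: act_uminus) (metis minus_minus)
        moreover have "- h \<in> G" using s(2) by (simp add: G_def pm_def)
        ultimately show ?thesis using s(1) unfolding orbit_def by blast
      next
        case False2: False
        from False obtain i where ui: "u i < 0" by (auto simp: not_le)
        from False2 obtain j where uj: "u j > 0" by (auto simp: not_le)
        have m: "j \<ge> 1" "i \<ge> 1" "j \<noteq> i" and ueq: "u = (\<lambda>t. ?g * (\<e> j t - \<e> i t))"
          using mixed[OF lat si u uj ui] by auto
        have c: ?c using e1_notin[OF lat si u uj ui] .
        obtain \<sigma> where s: "\<sigma> \<in> Sym" "\<sigma> 1 = j" "\<sigma> 2 = i" using transport[of 1 2 j i] m by auto
        have "act \<sigma> (gvec_lattice L) = u"
          using act_vec2[of \<sigma> ?g 1 2] s ueq by (simp add: gvec_lattice_def Sym_def)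
        moreover have "gvec_lattice L \<in> G" using c by (simp add: G_def)
        ultimately show ?thesis using s(1) unfolding orbit_def by blast
      qed
    qed
  qed
  ultimately have "equivariant_graver_basis L G" by (simp add: equivariant_graver_basis_def)
  moreover have "pm H \<subseteq> G" by (simp add: G_def)
  moreover have "G \<subseteq> pm H \<union> {gvec_lattice L, - gvec_lattice L}" by (auto simp: G_def)
  ultimately show ?thesis using fin by blast
qed

end
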